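(* Let $k\ge 1$ be an integer and $\beta,\gamma>0$, and put $R_0=\beta/\gamma$. For $\boldsymbol{y}=(y_1,\dots,y_k)\in\mathbb{R}^k$ and $\boldsymbol{\theta}=(\theta_1,\dots,\theta_k)\in\mathbb{R}^k$ define $$H_k(\boldsymbol{y},\boldsymbol{\theta})=\beta\Big(\sum_{m=1}^k y_m\Big)\Big(1-\sum_{m=1}^k y_m\Big)\big(e^{\theta_1}-1\big)+k\gamma\sum_{m=1}^{k-1}y_m\big(e^{-\theta_m+\theta_{m+1}}-1\big)+k\gamma\,y_k\big(e^{-\theta_k}-1\big),$$ and $$S_k(\boldsymbol{\theta})=\ln\Big(\frac{1}{k}\sum_{m=1}^k e^{\theta_m}\Big)-\frac{\gamma}{\beta}\Big(1-\frac{k}{\sum_{m=1}^k e^{\theta_m}}\Big).$$ Let $z^*$ be the unique positive real number with $\sum_{m=1}^k (z^* )^m=k\gamma/\beta$, let $\theta_k^*=\ln z^*$, and let $\boldsymbol{\theta}^*=(k,k-1,\dots,2,1)\,\theta_k^*\in\mathbb{R}^k$. Then: (i) for every $\boldsymbol{\theta}\in\mathbb{R}^k$, $H_k\big(\nabla S_k(\boldsymbol{\theta}),\boldsymbol{\theta}\big)=0$, where $\nabla S_k=(\partial S_k/\partial\theta_1,\dots,\partial S_k/\partial\theta_k)$; (ii) $S_k(\mathbf{0})=0$; (iii) $S_k(\boldsymbol{\theta}^* )=1-\frac{1}{R_0}-\ln R_0$.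
   Context: $H_k$ is the Hamiltonian associated with the SIS infection model with $k$ infectious stages (Erlang-distributed infectious periods), where $y_m$ is the scaled number of individuals in infectious stage $m$ and $\theta_m$ is the conjugate momentum variable. *)

theory Defs
  imports "HOL-Analysis.Analysis"
begin

text \<open>Vectors in R^k are represented as functions nat => real, using the
 components 1..k only.\<close>

definition H :: "nat \<Rightarrow> real \<Rightarrow> real \<Rightarrow> (nat \<Rightarrow> real) \<Rightarrow> (nat \<Rightarrow> real) \<Rightarrow> real" where
  "H k \<beta> \<gamma> y \<theta> =
     \<beta> * (\<Sum>m=1..k. y m) * (1 - (\<Sum>m=1..k. y m)) * (exp (\<theta> 1) - 1)
     + real k * \<gamma> * (\<Sum>m=1..k-1. y m * (exp (- \<theta> m + \<theta> (m+1)) - 1))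
     + real k * \<gamma> * y k * (exp (- \<theta> k) - 1)"

definition S :: "nat \<Rightarrow> real \<Rightarrow> real \<Rightarrow> (nat \<Rightarrow> real) \<Rightarrow> real" where
  "S k \<beta> \<gamma> \<theta> =
     ln ((1 / real k) * (\<Sum>m=1..k. exp (\<theta> m)))
     - \<gamma> / \<beta> * (1 - real k / (\<Sum>m=1..k. exp (\<theta> m)))"

definition gradS :: "nat \<Rightarrow> real \<Rightarrow> real \<Rightarrow> (nat \<Rightarrow> real) \<Rightarrow> (nat \<Rightarrow> real)" where
  "gradS k \<beta> \<gamma> \<theta> = (\<lambda>m. deriv (\<lambda>t. S k \<beta> \<gamma> (\<theta>(m := t))) (\<theta> m))"

end

theory Submission
  imports Defs
begin

lemma sum_upd:
  fixes \<theta> :: "nat \<Rightarrow> real"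
  assumes "m \<in> {1..k}"
  shows "(\<Sum>j=1..k. exp ((\<theta>(m:=t)) j)) = exp t + ((\<Sum>j=1..k. exp (\<theta> j)) - exp (\<theta> m))"
proof -
  have "(\<Sum>j=1..k. exp ((\<theta>(m:=t)) j)) = exp ((\<theta>(m:=t)) m) + (\<Sum>j\<in>{1..k}-{m}. exp ((\<theta>(m:=t)) j))"
    using assms by (intro sum.remove) auto
  also have "exp ((\<theta>(m:=t)) m) = exp t" by simp
  also have "(\<Sum>j\<in>{1..k}-{m}. exp ((\<theta>(m:=t)) j)) = (\<Sum>j\<in>{1..k}-{m}. exp (\<theta> j))"
    by (rule sum.cong) auto
  also have "\<dots> = (\<Sum>j=1..k. exp (\<theta> j)) - exp (\<theta> m)"
    using assms sum.remove[of "{1..k}" m "\<lambda>j. exp (\<theta> j)"] by auto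
  finally show ?thesis .
qed

lemma rest_nonneg:
  fixes \<theta> :: "nat \<Rightarrow> real"
  assumes "m \<in> {1..k}"
  shows "(\<Sum>j=1..k. exp (\<theta> j)) - exp (\<theta> m) \<ge> 0"
proof -
  have "(\<Sum>j=1..k. exp (\<theta> j)) - exp (\<theta> m) = (\<Sum>j\<in>{1..k}-{m}. exp (\<theta> j))"
    using assms sum.remove[of "{1..k}" m "\<lambda>j. exp (\<theta> j)"] by auto
  also have "\<dots> \<ge> 0" by (rule sum_nonneg) auto
  finally show ?thesis .
qed

lemma grad:
  fixes \<theta> :: "nat \<Rightarrow> real"
  assumes "m \<in> {1..k}" and "\<beta> > 0"
  shows "gradS k \<beta> \<gamma> \<theta> m = exp (\<theta> m) * (1 / (\<Sum>j=1..k. exp (\<theta> j))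
     - \<gamma> * real k / (\<beta> * (\<Sum>j=1..k. exp (\<theta> j))^2))"
proof -
  define A where "A = (\<Sum>j=1..k. exp (\<theta> j)) - exp (\<theta> m)"
  have A: "A \<ge> 0" unfolding A_def using rest_nonneg[OF assms(1)] .
  have k: "real k > 0" using assms(1) by auto
  have f: "(\<lambda>t. S k \<beta> \<gamma> (\<theta>(m := t))) =
     (\<lambda>t. ln ((1 / real k) * (exp t + A)) - \<gamma> / \<beta> * (1 - real k / (exp t + A)))"
    unfolding S_def A_def by (simp only: sum_upd[OF assms(1)])
  have pos: "exp (\<theta> m) + A > 0" using A by (smt (verit) exp_gt_zero)
  have "((\<lambda>t. ln ((1 / real k) * (exp t + A)) - \<gamma> / \<beta> * (1 - real k / (exp t + A)))
     has_real_derivative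
     ((1 / real k) * exp (\<theta> m)) / ((1 / real k) * (exp (\<theta> m) + A))
      - \<gamma> / \<beta> * (- (- (real k * exp (\<theta> m)) / (exp (\<theta> m) + A)^2))) (at (\<theta> m))"
    using pos k assms(2)
    by (auto intro!: derivative_eq_intros simp: power2_eq_square ac_simps)
  hence g1: "gradS k \<beta> \<gamma> \<theta> m = ((1 / real k) * exp (\<theta> m)) / ((1 / real k) * (exp (\<theta> m) + A))
      - \<gamma> / \<beta> * (- (- (real k * exp (\<theta> m)) / (exp (\<theta> m) + A)^2))"
    unfolding gradS_def f by (rule DERIV_imp_deriv)
  moreover have "exp (\<theta> m) + A = (\<Sum>j=1..k. exp (\<theta> j))" unfolding A_def by simp
  have Sp: "(\<Sum>j=1..k. exp (\<theta> j)) > 0" using pos unfolding A_def by simp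
  show ?thesis unfolding g1 \<open>exp (\<theta> m) + A = _\<close> using k Sp assms(2)
    by (simp add: field_simps power2_eq_square)
qed

theorem mainTheorem1:
  fixes k :: nat and \<beta> \<gamma> z :: real
  assumes "k \<ge> 1" and "\<beta> > 0" and "\<gamma> > 0"
    and "z > 0" and "(\<Sum>m=1..k. z ^ m) = real k * \<gamma> / \<beta>"
  shows "(\<forall>\<theta> :: nat \<Rightarrow> real. H k \<beta> \<gamma> (gradS k \<beta> \<gamma> \<theta>) \<theta> = 0)
    \<and> S k \<beta> \<gamma> (\<lambda>_. 0) = 0
    \<and> S k \<beta> \<gamma> (\<lambda>m. real (k + 1 - m) * ln z)
        = 1 - 1 / (\<beta> / \<gamma>) - ln (\<beta> / \<gamma>)"
proof (intro conjI allI)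
  fix \<theta> :: "nat \<Rightarrow> real"
  define E where "E = (\<Sum>j=1..k. exp (\<theta> j))"
  define c where "c = 1 / E - \<gamma> * real k / (\<beta> * E^2)"
  have Epos: "E > 0" unfolding E_def using assms(1)
    by (intro sum_pos) auto
  have g: "\<And>m. m \<in> {1..k} \<Longrightarrow> gradS k \<beta> \<gamma> \<theta> m = exp (\<theta> m) * c"
    unfolding c_def E_def using grad assms(2) by blast
  have s1: "(\<Sum>m=1..k. gradS k \<beta> \<gamma> \<theta> m) = c * E"
    unfolding E_def by (simp add: g sum_distrib_left mult.commute)
  have s2: "(\<Sum>m=1..k-1. gradS k \<beta> \<gamma> \<theta> m * (exp (- \<theta> m + \<theta> (m+1)) - 1))
      = (\<Sum>m=1..k-1. c * (exp (\<theta> (Suc m)) - exp (\<theta> m)))"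
  proof (rule sum.cong)
    fix m assume "m \<in> {1..k-1}"
    hence "m \<in> {1..k}" by auto
    thus "gradS k \<beta> \<gamma> \<theta> m * (exp (- \<theta> m + \<theta> (m+1)) - 1) = c * (exp (\<theta> (Suc m)) - exp (\<theta> m))"
      by (simp add: g exp_diff field_simps)
  qed simp
  have tel: "(\<Sum>m=1..k-1. (exp (\<theta> (Suc m)) - exp (\<theta> m))) = exp (\<theta> k) - exp (\<theta> 1)"
  proof -
    have "(\<Sum>m=1..k-1. (exp (\<theta> (Suc m)) - exp (\<theta> m))) = exp (\<theta> (Suc (k-1))) - exp (\<theta> 1)"
      by (rule sum_Suc_diff) (use assms(1) in simp)
    thus ?thesis using assms(1) by simp
  qed
  have gk: "gradS k \<beta> \<gamma> \<theta> k = exp (\<theta> k) * c" using g assms(1) by auto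
  have cE: "c * E = 1 - \<gamma> * real k / (\<beta> * E)" unfolding c_def using Epos
    by (simp add: field_simps power2_eq_square)
  have "H k \<beta> \<gamma> (gradS k \<beta> \<gamma> \<theta>) \<theta> =
     \<beta> * (c * E) * (1 - c * E) * (exp (\<theta> 1) - 1)
     + real k * \<gamma> * (c * (exp (\<theta> k) - exp (\<theta> 1)))
     + real k * \<gamma> * (exp (\<theta> k) * c) * (exp (- \<theta> k) - 1)"
  proof -
    have "(\<Sum>m=1..k-1. c * (exp (\<theta> (Suc m)) - exp (\<theta> m))) = c * (exp (\<theta> k) - exp (\<theta> 1))"
      by (simp only: sum_distrib_left[symmetric] tel)
    thus ?thesis unfolding H_def s1 s2 gk by simp
  qed
  also have "\<beta> * (c * E) * (1 - c * E) = real k * \<gamma> * c"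
    unfolding c_def using Epos assms(2) by (simp add: field_simps power2_eq_square)
  finally show "H k \<beta> \<gamma> (gradS k \<beta> \<gamma> \<theta>) \<theta> = 0"
    by (simp add: exp_minus field_simps)
next
  show "S k \<beta> \<gamma> (\<lambda>_. 0) = 0" using assms(1) by (simp add: S_def)
next
  have "(\<Sum>m=1..k. exp (real (k + 1 - m) * ln z)) = (\<Sum>m=1..k. z ^ (k + 1 - m))"
  proof (rule sum.cong)
    fix m
    have "\<And>n. exp (real n * ln z) = z ^ n" using assms(4) by (simp add: exp_of_nat_mult)
    thus "exp (real (k + 1 - m) * ln z) = z ^ (k + 1 - m)" by blast
  qed simp
  also have "\<dots> = (\<Sum>m=1..k. z ^ m)"
    by (rule sum.reindex_bij_witness[where i="\<lambda>m. k + 1 - m" and j="\<lambda>m. k + 1 - m"]) auto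
  finally have E: "(\<Sum>m=1..k. exp (real (k + 1 - m) * ln z)) = real k * \<gamma> / \<beta>"
    using assms(5) by simp
  have k: "real k > 0" using assms(1) by auto
  show "S k \<beta> \<gamma> (\<lambda>m. real (k + 1 - m) * ln z) = 1 - 1 / (\<beta> / \<gamma>) - ln (\<beta> / \<gamma>)"
    unfolding S_def E using k assms(2,3)
    by (simp add: ln_div field_simps)
qed

end
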